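(* Let $n\ge 2$ be a power of $2$, let $f\colon\{0,1\}^n\to\{0,1,*\}$ be a partial function and let $x\in f^{-1}( * )$. Then there exists a total function $g\colon\{0,1\}^{N}\to\{0,1\}$ with $N\le 3n^2\log_2^2 n$ such that \[ \mathrm{C}_0(g)\;\ge\;\min\{\mathrm{C}_{\bar 0}(f,x),\,\mathrm{C}_{\bar 1}(f,x)\}\qquad\text{and}\qquad \mathrm{UC}_1(g)\;\le\;3\,\mathrm{C}(f)\log_2^2 n. \]
   Context: For a partial function $f\colon\{0,1\}^n\to\{0,1,*\}$ (inputs with value $*$ are "undefined"): a partial input $\rho\in\{0,1,*\}^n$ is consistent with $x\in\{0,1\}^n$ if $\rho_i=x_i$ whenever $\rho_i\neq *$; its size $|\rho|$ is the number of non-$*$ entries. For $\Sigma\subseteq\{0,1,*\}$, $\rho$ is a $\Sigma$-certificate for $x$ if $\rho$ is consistent with $x$ and $f(x')\in\Sigma$ for every $x'$ consistent with $\rho$. $\mathrm{C}_\Sigma(f,x)$ is the least size of a $\Sigma$-certificate for $x$, and $\mathrm{C}_\Sigma(f)=\max_{x\in f^{-1}(\Sigma)}\mathrm{C}_\Sigma(f,x)$. We write $0,1,\bar0,\bar1$ for $\Sigma=\{0\},\{1\},\{1,*\},\{0,*\}$ respectively, and $\mathrm{C}(f)=\max\{\mathrm{C}_0(f),\mathrm{C}_1(f)\}$. For a total function $g$, $\mathrm{C}_0(g)$ equals the least $k$ such that $g$ is a width-$k$ CNF, and $\mathrm{UC}_1(g)$ is the least $k$ such that $g$ can be written as an unambiguous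 width-$k$ DNF (a DNF in which every input satisfies at most one term; width = maximum number of literals in a term). *)

theory Defs
  imports Complex_Main
begin

text \<open>Inputs in {0,1}^n are boolean lists of length n (True = 1).
  A partial function f : {0,1}^n -> {0,1,*} is a map  bool list => bool option,
  with None standing for the undefined value *, Some False for 0, Some True for 1;
  only its values on lists of length n matter.
  A partial input rho in {0,1,*}^n is a  bool option list  of length n.\<close>

definition consistent :: "bool option list \<Rightarrow> bool list \<Rightarrow> bool" where
  "consistent \<rho> x \<longleftrightarrow> length \<rho> = length x \<and>
     (\<forall>i < length x. \<rho> ! i \<noteq> None \<longrightarrow> \<rho> ! i = Some (x ! i))"

definition psize :: "bool option list \<Rightarrow> nat" where
  "psize \<rho> = card {i. i < length \<rho> \<and> \<rho> ! i \<noteq> None}"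

definition is_cert ::
  "nat \<Rightarrow> (bool list \<Rightarrow> bool option) \<Rightarrow> bool option set \<Rightarrow> bool option list \<Rightarrow> bool list \<Rightarrow> bool" where
  "is_cert n f \<Sigma> \<rho> x \<longleftrightarrow> length x = n \<and> consistent \<rho> x \<and>
     (\<forall>x'. length x' = n \<longrightarrow> consistent \<rho> x' \<longrightarrow> f x' \<in> \<Sigma>)"

definition C_at ::
  "nat \<Rightarrow> (bool list \<Rightarrow> bool option) \<Rightarrow> bool option set \<Rightarrow> bool list \<Rightarrow> nat" where
  "C_at n f \<Sigma> x = (LEAST k. \<exists>\<rho>. is_cert n f \<Sigma> \<rho> x \<and> psize \<rho> = k)"

text \<open>C_Sigma(f) = max over x in f^{-1}(Sigma) (max of the empty set taken as 0).\<close>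
definition C_fun ::
  "nat \<Rightarrow> (bool list \<Rightarrow> bool option) \<Rightarrow> bool option set \<Rightarrow> nat" where
  "C_fun n f \<Sigma> = Max (insert 0 {C_at n f \<Sigma> x | x. length x = n \<and> f x \<in> \<Sigma>})"

abbreviation Sig0 :: "bool option set" where "Sig0 \<equiv> {Some False}"
abbreviation Sig1 :: "bool option set" where "Sig1 \<equiv> {Some True}"
abbreviation Sigbar0 :: "bool option set" where "Sigbar0 \<equiv> {Some True, None}"
abbreviation Sigbar1 :: "bool option set" where "Sigbar1 \<equiv> {Some False, None}"

definition C_total :: "nat \<Rightarrow> (bool list \<Rightarrow> bool option) \<Rightarrow> nat" where
  "C_total n f = max (C_fun n f Sig0) (C_fun n f Sig1)"

definition C0_total :: "nat \<Rightarrow> (bool list \<Rightarrow> bool) \<Rightarrow> nat" where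
  "C0_total N g = C_fun N (\<lambda>x. Some (g x)) Sig0"

text \<open>Unambiguous DNF over N variables: a finite set of terms (partial inputs of
  length N; a term is satisfied by x iff it is consistent with x); width = max term size.\<close>
definition is_unamb_dnf ::
  "nat \<Rightarrow> (bool list \<Rightarrow> bool) \<Rightarrow> bool option list set \<Rightarrow> nat \<Rightarrow> bool" where
  "is_unamb_dnf N g T k \<longleftrightarrow> finite T \<and> (\<forall>t\<in>T. length t = N \<and> psize t \<le> k) \<and>
     (\<forall>x. length x = N \<longrightarrow> (g x \<longleftrightarrow> (\<exists>t\<in>T. consistent t x))) \<and>
     (\<forall>x. length x = N \<longrightarrow> (\<forall>t1\<in>T. \<forall>t2\<in>T. consistent t1 x \<longrightarrow> consistent t2 x \<longrightarrow> t1 = t2))"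

definition UC1 :: "nat \<Rightarrow> (bool list \<Rightarrow> bool) \<Rightarrow> nat" where
  "UC1 N g = (LEAST k. \<exists>T. is_unamb_dnf N g T k)"

end

theory Submission
  imports Defs
begin

lemma bits_eq: fixes v1 v2 :: nat
  assumes "v1 < 2^k" "v2 < 2^k" "\<forall>r<k. bit v1 r = bit v2 r" shows "v1 = v2"
proof -
  have "take_bit k v1 = v1" "take_bit k v2 = v2" using assms by (simp_all add: take_bit_nat_eq_self_iff)
  then show ?thesis using assms(3) by (metis bit_eq_iff bit_take_bit_iff)
qed

lemma divmod_aux:
  fixes q d r :: nat assumes "r < d" shows "(q*d + r) div d = q" "(q*d + r) mod d = r"
  using assms by auto

lemma consistent_map_Some: "consistent (map Some y) x' \<Longrightarrow> x' = y"
  unfolding consistent_def by (auto intro: nth_equalityI)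

lemma psize_map_Some: "psize (map Some y) = length y"
proof -
  have "{i. i < length (map Some y) \<and> map Some y ! i \<noteq> None} = {..<length y}" by auto
  then show ?thesis unfolding psize_def by simp
qed

lemma C_at_le_n:
  assumes "length y = n" "f y \<in> \<Sigma>" shows "C_at n f \<Sigma> y \<le> n"
proof -
  have "is_cert n f \<Sigma> (map Some y) y"
    using assms consistent_map_Some unfolding is_cert_def by (auto simp: consistent_def[of _ y])
  then show ?thesis unfolding C_at_def
    by (metis (mono_tags, lifting) Least_le psize_map_Some assms(1))
qed

lemma C_at_witness:
  assumes "length y = n" "f y \<in> \<Sigma>" shows "\<exists>\<rho>. is_cert n f \<Sigma> \<rho> y \<and> psize \<rho> = C_at n f \<Sigma> y"
proof -
  have "is_cert n f \<Sigma> (map Some y) y"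
    using assms consistent_map_Some unfolding is_cert_def by (auto simp: consistent_def[of _ y])
  then have "\<exists>k \<rho>. is_cert n f \<Sigma> \<rho> y \<and> psize \<rho> = k" by blast
  then show ?thesis unfolding C_at_def by (smt (verit, best) LeastI_ex)
qed

lemma C_fun_ge:
  assumes "length y = n" "f y \<in> \<Sigma>" shows "C_at n f \<Sigma> y \<le> C_fun n f \<Sigma>"
proof -
  have "{C_at n f \<Sigma> x | x. length x = n \<and> f x \<in> \<Sigma>} \<subseteq> {..n}"
    using C_at_le_n by auto
  then have fin: "finite (insert 0 {C_at n f \<Sigma> x | x. length x = n \<and> f x \<in> \<Sigma>})"
    by (meson finite_atMost finite_insert finite_subset)
  show ?thesis unfolding C_fun_def using assms by (intro Max_ge[OF fin]) auto
qed

lemma C_fun_le: "C_fun n f \<Sigma> \<le> n"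
proof -
  have "{C_at n f \<Sigma> x | x. length x = n \<and> f x \<in> \<Sigma>} \<subseteq> {..n}"
    using C_at_le_n by auto
  then have fin: "finite (insert 0 {C_at n f \<Sigma> x | x. length x = n \<and> f x \<in> \<Sigma>})"
    by (meson finite_atMost finite_insert finite_subset)
  show ?thesis unfolding C_fun_def using C_at_le_n
    by (intro Max.boundedI[OF fin]) auto
qed

lemma not_cert:
  assumes "length x = n" "consistent \<rho> x" "psize \<rho> < C_at n f \<Sigma> x"
  shows "\<exists>x'. length x' = n \<and> consistent \<rho> x' \<and> f x' \<notin> \<Sigma>"
proof (rule ccontr)
  assume "\<not> ?thesis"
  then have "is_cert n f \<Sigma> \<rho> x" using assms unfolding is_cert_def by auto
  then have "C_at n f \<Sigma> x \<le> psize \<rho>" unfolding C_at_def by (metis (mono_tags, lifting) Least_le)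
  then show False using assms by simp
qed

definition NN :: "nat \<Rightarrow> nat \<Rightarrow> nat \<Rightarrow> nat" where "NN n k c = k*n + n*(k*c*k)"

definition mkf :: "nat \<Rightarrow> nat \<Rightarrow> nat \<Rightarrow> nat \<Rightarrow> (nat \<Rightarrow> nat \<Rightarrow> nat) \<Rightarrow> (nat \<Rightarrow> bool list) \<Rightarrow> nat \<Rightarrow> bool option" where
 "mkf n k c b P w j = (if j < k*n then
     (if j mod n \<in> P (j div n) ` {..<c} then Some (w (j div n) ! (j mod n)) else None)
   else if (j - k*n) div (k*c*k) = b then
     Some (bit (P ((j - k*n) mod (k*c*k) div (c*k)) ((j - k*n) mod (c*k) div k)) ((j - k*n) mod k))
   else None)"

definition mkterm :: "nat \<Rightarrow> nat \<Rightarrow> nat \<Rightarrow> nat \<Rightarrow> (nat \<Rightarrow> nat \<Rightarrow> nat) \<Rightarrow> (nat \<Rightarrow> bool list) \<Rightarrow> bool option list" where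
 "mkterm n k c b P w = map (mkf n k c b P w) [0..<NN n k c]"

lemma mkterm_len[simp]: "length (mkterm n k c b P w) = NN n k c"
  unfolding mkterm_def by simp

lemma mkterm_nth: "j < NN n k c \<Longrightarrow> mkterm n k c b P w ! j = mkf n k c b P w j"
  unfolding mkterm_def by simp

definition certok :: "nat \<Rightarrow> (bool list \<Rightarrow> bool option) \<Rightarrow> nat \<Rightarrow> nat \<Rightarrow> nat \<Rightarrow> (nat \<Rightarrow> nat \<Rightarrow> nat) \<Rightarrow> (nat \<Rightarrow> bool list) \<Rightarrow> bool" where
 "certok n f c i b P w \<longleftrightarrow> (\<forall>x'. length x' = n \<longrightarrow> (\<forall>e<c. x' ! P i e = w i ! P i e) \<longrightarrow> f x' = Some (bit b i))"

definition goodt where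
 "goodt n k c f b P w \<longleftrightarrow> b < n \<and> (\<forall>i<k. \<forall>e<c. P i e < n) \<and> (\<forall>i<k. certok n f c i b P w)"

definition Terms where
 "Terms n k c f = {mkterm n k c b P w | b P w. goodt n k c f b P w}"

definition gfun where "gfun n k c f z = (\<exists>t\<in>Terms n k c f. consistent t z)"

definition copy :: "bool list \<Rightarrow> nat \<Rightarrow> nat \<Rightarrow> bool list" where
  "copy z i n = map (\<lambda>p. z ! (i*n+p)) [0..<n]"

lemma idxY: fixes i k p n :: nat assumes "i < k" "p < n" shows "i*n+p < k*n" "(i*n+p) div n = i" "(i*n+p) mod n = p"
proof -
  have "i*n + p < i*n + n" using assms by linarith
  also have "\<dots> = (i+1)*n" by simp
  also have "\<dots> \<le> k*n" using assms by (intro mult_right_mono) auto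
  finally show "i*n+p < k*n" .
  show "(i*n+p) div n = i" "(i*n+p) mod n = p" using assms divmod_aux by auto
qed

lemma NN_ge: "k*n \<le> NN n k c" unfolding NN_def by simp

lemma idxB:
  assumes "b < n" "i < k" "e < c" "r < k"
  defines "j \<equiv> k*n + (b*(k*c*k) + (i*(c*k) + (e*k + r)))"
  shows "j < NN n k c" "\<not> j < k*n" "(j - k*n) div (k*c*k) = b"
    "(j - k*n) mod (k*c*k) div (c*k) = i" "(j - k*n) mod (c*k) div k = e" "(j - k*n) mod k = r"
proof -
  have h1: "e*k + r < c*k"
  proof -
    have "e*k + r < e*k + k" using assms by simp
    also have "\<dots> = (e+1)*k" by simp
    also have "\<dots> \<le> c*k" using assms by (intro mult_right_mono) auto
    finally show ?thesis .
  qed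
  have h2: "i*(c*k) + (e*k + r) < k*c*k"
  proof -
    have "i*(c*k) + (e*k + r) < i*(c*k) + c*k" using h1 by simp
    also have "\<dots> = (i+1)*(c*k)" by simp
    also have "\<dots> \<le> k*(c*k)" using assms by (intro mult_right_mono) auto
    finally show ?thesis by (simp add: mult.assoc)
  qed
  have jk: "j - k*n = b*(k*c*k) + (i*(c*k) + (e*k + r))" unfolding j_def by simp
  have "b*(k*c*k) + (i*(c*k) + (e*k + r)) < b*(k*c*k) + k*c*k" using h2 by simp
  also have "\<dots> = (b+1)*(k*c*k)" by simp
  also have "\<dots> \<le> n*(k*c*k)" using assms by (intro mult_right_mono) auto
  finally show "j < NN n k c" unfolding j_def NN_def by simp
  show "\<not> j < k*n" unfolding j_def by simp
  show "(j - k*n) div (k*c*k) = b" unfolding jk using divmod_aux(1)[OF h2] by simp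
  have m1: "(j - k*n) mod (k*c*k) = i*(c*k) + (e*k + r)" unfolding jk using divmod_aux(2)[OF h2] by simp
  show "(j - k*n) mod (k*c*k) div (c*k) = i" unfolding m1 using divmod_aux(1)[OF h1] by simp
  have e2: "j - k*n = (b*k+i)*(c*k) + (e*k + r)" unfolding jk by (simp add: algebra_simps)
  show "(j - k*n) mod (c*k) div k = e" unfolding e2 using divmod_aux(2)[OF h1] divmod_aux[of r k e] assms by simp
  have e3: "j - k*n = (b*k*c + i*c + e)*k + r" unfolding jk by (simp add: algebra_simps)
  show "(j - k*n) mod k = r" unfolding e3 using divmod_aux[of r k] assms by simp
qed

lemma consistentD: "consistent t z \<Longrightarrow> j < length z \<Longrightarrow> t ! j \<noteq> None \<Longrightarrow> t ! j = Some (z ! j)"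
  unfolding consistent_def by auto

lemma term_copy:
  assumes "goodt n k c f b P w" "i < k" "consistent (mkterm n k c b P w) z"
  shows "f (copy z i n) = Some (bit b i)"
proof -
  have lz: "length z = NN n k c" using assms(3) unfolding consistent_def by simp
  have "\<forall>e<c. copy z i n ! P i e = w i ! P i e"
  proof (intro allI impI)
    fix e assume e: "e < c"
    have pn: "P i e < n" using assms(1,2) e unfolding goodt_def by auto
    note ix = idxY[OF assms(2) pn]
    have jl: "i*n + P i e < NN n k c" using ix(1) NN_ge[of k n c] by linarith
    have "mkterm n k c b P w ! (i*n + P i e) = Some (w i ! P i e)"
      using jl ix e by (auto simp: mkterm_nth mkf_def)
    moreover have "mkterm n k c b P w ! (i*n + P i e) = Some (z ! (i*n + P i e))"
      using consistentD[OF assms(3)] jl lz calculation by simp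
    ultimately show "copy z i n ! P i e = w i ! P i e" using pn unfolding copy_def by simp
  qed
  moreover have "length (copy z i n) = n" unfolding copy_def by simp
  ultimately show ?thesis using assms(1,2) unfolding goodt_def certok_def by blast
qed

lemma term_bit:
  assumes "goodt n k c f b P w" "i < k" "e < c" "r < k" "consistent (mkterm n k c b P w) z"
  shows "bit (P i e) r = z ! (k*n + (b*(k*c*k) + (i*(c*k) + (e*k + r))))"
proof -
  have b: "b < n" using assms(1) unfolding goodt_def by simp
  note ix = idxB[OF b assms(2,3,4)]
  have lz: "length z = NN n k c" using assms(5) unfolding consistent_def by simp
  let ?j = "k*n + (b*(k*c*k) + (i*(c*k) + (e*k + r)))"
  have "mkterm n k c b P w ! ?j = Some (bit (P i e) r)"
    using ix by (simp add: mkterm_nth mkf_def)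
  moreover have "mkterm n k c b P w ! ?j = Some (z ! ?j)"
    using consistentD[OF assms(5)] ix(1) lz calculation by simp
  ultimately show ?thesis by simp
qed


lemma term_unamb:
  assumes n: "n = 2^k" and g1: "goodt n k c f b1 P1 w1" and g2: "goodt n k c f b2 P2 w2"
    and c1: "consistent (mkterm n k c b1 P1 w1) z" and c2: "consistent (mkterm n k c b2 P2 w2) z"
  shows "mkterm n k c b1 P1 w1 = mkterm n k c b2 P2 w2"
proof -
  have lz: "length z = NN n k c" using c1 unfolding consistent_def by simp
  have "\<forall>i<k. bit b1 i = bit b2 i"
    using term_copy[OF g1 _ c1] term_copy[OF g2 _ c2] by (metis option.inject)
  then have bb: "b1 = b2" using bits_eq[of b1 k b2] g1 g2 n unfolding goodt_def by auto
  have PP: "\<forall>i<k. \<forall>e<c. P1 i e = P2 i e"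
  proof (intro allI impI)
    fix i e assume i: "i < k" and e: "e < c"
    have "\<forall>r<k. bit (P1 i e) r = bit (P2 i e) r"
      using term_bit[OF g1 i e _ c1] term_bit[OF g2 i e _ c2] bb by simp
    then show "P1 i e = P2 i e" using bits_eq[of "P1 i e" k "P2 i e"] g1 g2 n i e
      unfolding goodt_def by auto
  qed
  have supp: "\<forall>j<NN n k c. (mkf n k c b1 P1 w1 j = None) = (mkf n k c b2 P2 w2 j = None)"
  proof (intro allI impI)
    fix j assume j: "j < NN n k c"
    show "(mkf n k c b1 P1 w1 j = None) = (mkf n k c b2 P2 w2 j = None)"
    proof (cases "j < k*n")
      case True
      then have "j div n < k" by (simp add: less_mult_imp_div_less)
      then have "P1 (j div n) ` {..<c} = P2 (j div n) ` {..<c}" using PP by (intro image_cong) auto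
      then show ?thesis using True by (simp add: mkf_def)
    next
      case False
      then show ?thesis using bb by (simp add: mkf_def)
    qed
  qed
  show ?thesis
  proof (rule nth_equalityI)
    show "length (mkterm n k c b1 P1 w1) = length (mkterm n k c b2 P2 w2)" by simp
    fix j assume "j < length (mkterm n k c b1 P1 w1)"
    then have j: "j < NN n k c" by simp
    show "mkterm n k c b1 P1 w1 ! j = mkterm n k c b2 P2 w2 ! j"
    proof (cases "mkterm n k c b1 P1 w1 ! j = None")
      case True
      then show ?thesis using supp j by (simp add: mkterm_nth)
    next
      case False
      then have "mkterm n k c b2 P2 w2 ! j \<noteq> None" using supp j by (simp add: mkterm_nth)
      then have a2: "mkterm n k c b2 P2 w2 ! j = Some (z ! j)" using consistentD[OF c2] j lz by simp
      have a1: "mkterm n k c b1 P1 w1 ! j = Some (z ! j)" using consistentD[OF c1] j lz False by simp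
      show ?thesis using a1 a2 by simp
    qed
  qed
qed

lemma term_psize:
  shows "psize (mkterm n k c b P w) \<le> k*c + k*c*k"
proof -
  let ?t = "mkterm n k c b P w"
  let ?W = "k*c*k"
  define A where "A = (\<lambda>(i,e). i*n + P i e) ` ({..<k} \<times> {..<c})"
  define B where "B = {k*n + b*?W ..< k*n + b*?W + ?W}"
  have sub: "{j. j < length ?t \<and> ?t ! j \<noteq> None} \<subseteq> A \<union> B"
  proof
    fix j assume "j \<in> {j. j < length ?t \<and> ?t ! j \<noteq> None}"
    then have j: "j < NN n k c" and nn: "mkf n k c b P w j \<noteq> None" by (auto simp: mkterm_nth)
    show "j \<in> A \<union> B"
    proof (cases "j < k*n")
      case True
      then have i: "j div n < k" by (simp add: less_mult_imp_div_less)
      have "j mod n \<in> P (j div n) ` {..<c}"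
      proof (rule ccontr)
        assume "j mod n \<notin> P (j div n) ` {..<c}"
        then have "mkf n k c b P w j = None" using True unfolding mkf_def by simp
        then show False using nn by simp
      qed
      then obtain e where e: "e < c" "j mod n = P (j div n) e" by auto
      have "j = (j div n)*n + P (j div n) e" using e(2) div_mult_mod_eq[of j n] by simp
      then have "j = (\<lambda>(i,e). i*n + P i e) (j div n, e)" by simp
      moreover have "(j div n, e) \<in> {..<k} \<times> {..<c}" using i e by simp
      ultimately have "j \<in> A" unfolding A_def by (rule image_eqI)
      then show ?thesis by simp
    next
      case False
      have d: "(j - k*n) div ?W = b"
      proof (rule ccontr)
        assume "(j - k*n) div ?W \<noteq> b"
        then have "mkf n k c b P w j = None" using False unfolding mkf_def by simp
        then show False using nn by simp
      qed
      have W: "?W > 0"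
      proof (rule ccontr)
        assume "\<not> ?W > 0" then have "?W = 0" by simp
        then have "NN n k c = k*n" unfolding NN_def by simp
        then show False using j False by simp
      qed
      have l1: "(j - k*n) div ?W * ?W \<le> j - k*n" by (rule div_times_less_eq_dividend)
      have l2: "j - k*n < ?W + (j - k*n) div ?W * ?W" using W by (rule dividend_less_div_times)
      have "k*n + b*?W \<le> j" using l1 d False by simp
      moreover have "j < k*n + b*?W + ?W" using l2 d False by simp
      ultimately have "j \<in> B" unfolding B_def by simp
      then show ?thesis by simp
    qed
  qed
  have "card A \<le> card ({..<k} \<times> {..<c})" unfolding A_def by (rule card_image_le) simp
  then have cA: "card A \<le> k*c" by (simp add: card_cartesian_product)
  have cB: "card B = ?W" unfolding B_def by simp
  have fA: "finite A" unfolding A_def by simp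
  have fB: "finite B" unfolding B_def by simp
  have "card (A \<union> B) \<le> card A + card B" by (rule card_Un_le)
  then have u: "card (A \<union> B) \<le> k*c + ?W" using cA cB by linarith
  have "card {j. j < length ?t \<and> ?t ! j \<noteq> None} \<le> card (A \<union> B)"
    using sub fA fB by (intro card_mono) auto
  then show ?thesis unfolding psize_def using u by linarith
qed

lemma Terms_finite: "finite (Terms n k c f)"
proof -
  have "Terms n k c f \<subseteq> {xs. set xs \<subseteq> UNIV \<and> length xs = NN n k c}" unfolding Terms_def by auto
  moreover have "finite {xs :: bool option list. set xs \<subseteq> UNIV \<and> length xs = NN n k c}"
    by (rule finite_lists_length_eq) simp
  ultimately show ?thesis by (rule finite_subset)
qed

lemma UC1_bound:
  assumes "n = 2^k"
  shows "UC1 (NN n k c) (gfun n k c f) \<le> k*c + k*c*k"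
proof -
  have "is_unamb_dnf (NN n k c) (gfun n k c f) (Terms n k c f) (k*c + k*c*k)"
    unfolding is_unamb_dnf_def
  proof (intro conjI allI impI ballI)
    show "finite (Terms n k c f)" by (rule Terms_finite)
  next
    fix t assume "t \<in> Terms n k c f"
    then show "length t = NN n k c" "psize t \<le> k*c + k*c*k" unfolding Terms_def using term_psize by auto
  next
    fix x :: "bool list" assume "length x = NN n k c"
    show "gfun n k c f x = (\<exists>t\<in>Terms n k c f. consistent t x)" unfolding gfun_def ..
  next
    fix x t1 t2 assume "t1 \<in> Terms n k c f" "t2 \<in> Terms n k c f" "consistent t1 x" "consistent t2 x"
    then show "t1 = t2" unfolding Terms_def using term_unamb[OF assms] by blast
  qed
  then show ?thesis unfolding UC1_def by (metis (mono_tags, lifting) Least_le)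
qed



lemma exists_input:
  assumes "length x = n" "consistent \<rho> x" "f x = None"
    "psize \<rho> < C_at n f Sigbar0 x" "psize \<rho> < C_at n f Sigbar1 x"
  shows "\<exists>y. length y = n \<and> consistent \<rho> y \<and> f y = Some v"
proof (cases v)
  case True
  from not_cert[OF assms(1,2,5)] obtain y where "length y = n" "consistent \<rho> y" "f y \<notin> Sigbar1" by blast
  then show ?thesis using True by (metis insertCI option.exhaust)
next
  case False
  from not_cert[OF assms(1,2,4)] obtain y where "length y = n" "consistent \<rho> y" "f y \<notin> Sigbar0" by blast
  then show ?thesis using False by (metis insertCI option.exhaust)
qed

lemma small_cert:
  assumes "length y = n" "f y = Some v"
  shows "\<exists>S. S \<subseteq> {..<n} \<and> card S \<le> C_total n f \<and>
     (\<forall>x'. length x' = n \<longrightarrow> (\<forall>p\<in>S. x' ! p = y ! p) \<longrightarrow> f x' = Some v)"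
proof -
  from C_at_witness[of y n f "{Some v}"] assms obtain \<rho> where
    r: "is_cert n f {Some v} \<rho> y" "psize \<rho> = C_at n f {Some v} y" by auto
  have "C_at n f {Some v} y \<le> C_fun n f {Some v}" using C_fun_ge[of y n f "{Some v}"] assms by simp
  also have "\<dots> \<le> C_total n f" unfolding C_total_def by (cases v) simp_all
  finally have cb: "psize \<rho> \<le> C_total n f" using r(2) by simp
  have lr: "length \<rho> = n" using r(1) unfolding is_cert_def consistent_def by auto
  define S where "S = {p. p < length \<rho> \<and> \<rho> ! p \<noteq> None}"
  have "S \<subseteq> {..<n}" unfolding S_def using lr by auto
  moreover have "card S \<le> C_total n f" using cb unfolding S_def psize_def .
  moreover have "\<forall>x'. length x' = n \<longrightarrow> (\<forall>p\<in>S. x' ! p = y ! p) \<longrightarrow> f x' = Some v"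
  proof (intro allI impI)
    fix x' assume a: "length x' = n" "\<forall>p\<in>S. x' ! p = y ! p"
    have cy: "consistent \<rho> y" using r(1) unfolding is_cert_def by simp
    have "consistent \<rho> x'"
      unfolding consistent_def
    proof (intro conjI allI impI)
      show "length \<rho> = length x'" using lr a(1) by simp
      fix i assume i: "i < length x'" "\<rho> ! i \<noteq> None"
      then have "i \<in> S" unfolding S_def using lr a(1) by simp
      then have "x' ! i = y ! i" using a(2) by simp
      moreover have "\<rho> ! i = Some (y ! i)" using consistentD[OF cy, of i] i a(1) assms(1) by simp
      ultimately show "\<rho> ! i = Some (x' ! i)" by simp
    qed
    then show "f x' = Some v" using r(1) a unfolding is_cert_def by auto
  qed
  ultimately show ?thesis by blast
qed

lemma cover_list:
  fixes S :: "nat set" and n c :: nat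
  assumes "S \<subseteq> {..<n}" "card S \<le> c" "0 < n"
  shows "\<exists>Q. (\<forall>e<c. Q e < n) \<and> S \<subseteq> Q ` {..<c}"
proof -
  have fS: "finite S" using assms(1) finite_subset by blast
  define xs where "xs = sorted_list_of_set S"
  have sx: "set xs = S" "length xs = card S" unfolding xs_def using fS by auto
  define Q where "Q e = (xs @ replicate c 0) ! e" for e
  have "\<forall>e<c. Q e < n"
  proof (intro allI impI)
    fix e assume "e < c"
    show "Q e < n"
    proof (cases "e < length xs")
      case True
      then have "Q e = xs ! e" unfolding Q_def by (simp add: nth_append)
      moreover have "xs ! e \<in> S" using nth_mem[OF True] sx(1) by simp
      ultimately show ?thesis using assms(1) by auto
    next
      case False
      then have "Q e = 0" using \<open>e < c\<close> unfolding Q_def by (simp add: nth_append)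
      then show ?thesis using assms(3) by simp
    qed
  qed
  moreover have "S \<subseteq> Q ` {..<c}"
  proof
    fix p assume "p \<in> S"
    then have "p \<in> set xs" using sx(1) by simp
    then obtain e where e: "e < length xs" "xs ! e = p" by (auto simp: in_set_conv_nth)
    then have "Q e = p" unfolding Q_def by (simp add: nth_append)
    moreover have "e < c" using e sx assms(2) by simp
    ultimately show "p \<in> Q ` {..<c}" by blast
  qed
  ultimately show ?thesis by blast
qed


definition z0 where "z0 n k c x = map (\<lambda>j. if j < k*n then x!(j mod n) else False) [0..<NN n k c]"

lemma copy_z0: assumes "i < k" "length x = n" shows "copy (z0 n k c x) i n = x"
proof (rule nth_equalityI)
  show "length (copy (z0 n k c x) i n) = length x" using assms unfolding copy_def by simp
  fix p assume "p < length (copy (z0 n k c x) i n)"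
  then have p: "p < n" unfolding copy_def by simp
  note ix = idxY[OF assms(1) p]
  have "i*n+p < NN n k c" using ix(1) NN_ge[of k n c] by linarith
  then show "copy (z0 n k c x) i n ! p = x ! p" using ix p unfolding copy_def z0_def by simp
qed

lemma g_z0: assumes "0 < k" "length x = n" "f x = None" shows "\<not> gfun n k c f (z0 n k c x)"
proof
  assume "gfun n k c f (z0 n k c x)"
  then obtain b P w where "goodt n k c f b P w" "consistent (mkterm n k c b P w) (z0 n k c x)"
    unfolding gfun_def Terms_def by blast
  from term_copy[OF this(1) assms(1) this(2)] copy_z0[OF assms(1,2)] assms(3) show False by simp
qed

lemma adversary:
  assumes n: "n = 2^k" "0 < k" and lx: "length x = n" and fx: "f x = None"
    and c: "c = C_total n f"
    and cert: "is_cert (NN n k c) (\<lambda>z. Some (gfun n k c f z)) Sig0 \<rho> (z0 n k c x)"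
  shows "psize \<rho> \<ge> min (C_at n f Sigbar0 x) (C_at n f Sigbar1 x)"
proof (rule ccontr)
  assume "\<not> ?thesis"
  then have small: "psize \<rho> < C_at n f Sigbar0 x" "psize \<rho> < C_at n f Sigbar1 x" by auto
  let ?W = "k*c*k"
  have npos: "0 < n" using n by simp
  have lz0: "length (z0 n k c x) = NN n k c" unfolding z0_def by simp
  have cr: "consistent \<rho> (z0 n k c x)" using cert unfolding is_cert_def by simp
  have lr: "length \<rho> = NN n k c" using cr lz0 unfolding consistent_def by simp
  define S where "S = {j. j < length \<rho> \<and> \<rho> ! j \<noteq> None}"
  have fS: "finite S" unfolding S_def by simp
  have cS: "card S = psize \<rho>" unfolding S_def psize_def ..
  have mn: "C_at n f Sigbar0 x \<le> n" using C_at_le_n[of x n f Sigbar0] lx fx by simp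
  define \<rho>i where "\<rho>i i = map (\<lambda>p. \<rho> ! (i*n+p)) [0..<n]" for i
  have ci: "consistent (\<rho>i i) x" if i: "i < k" for i
    unfolding consistent_def
  proof (intro conjI allI impI)
    show "length (\<rho>i i) = length x" using lx unfolding \<rho>i_def by simp
    fix p assume p: "p < length x" "\<rho>i i ! p \<noteq> None"
    note ix = idxY[OF i, of p n]
    have jl: "i*n+p < NN n k c" using ix(1) NN_ge[of k n c] p lx by linarith
    have "\<rho> ! (i*n+p) = Some (z0 n k c x ! (i*n+p))"
      using consistentD[OF cr] jl lz0 p lx unfolding \<rho>i_def by simp
    then show "\<rho>i i ! p = Some (x ! p)" using jl ix p lx unfolding \<rho>i_def z0_def by simp
  qed
  have pi: "psize (\<rho>i i) \<le> psize \<rho>" if i: "i < k" for i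
  proof -
    have "(\<lambda>p. i*n+p) ` {p. p < length (\<rho>i i) \<and> \<rho>i i ! p \<noteq> None} \<subseteq> S"
    proof
      fix j assume "j \<in> (\<lambda>p. i*n+p) ` {p. p < length (\<rho>i i) \<and> \<rho>i i ! p \<noteq> None}"
      then obtain p where p0: "p < length (\<rho>i i)" "\<rho>i i ! p \<noteq> None" "j = i*n+p" by blast
      have p: "p < n" "\<rho> ! (i*n+p) \<noteq> None" "j = i*n+p" using p0 unfolding \<rho>i_def by auto
      have "i*n+p < NN n k c" using idxY(1)[OF i p(1)] NN_ge[of k n c] by linarith
      then show "j \<in> S" using p lr unfolding S_def by simp
    qed
    moreover have "inj_on (\<lambda>p. i*n+p) {p. p < length (\<rho>i i) \<and> \<rho>i i ! p \<noteq> None}" by (simp add: inj_on_def)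
    ultimately show ?thesis unfolding psize_def using card_inj_on_le[OF _ _ fS] cS psize_def S_def
      by (metis (no_types, lifting))
  qed
  define TB where "TB = (\<lambda>j. (j - k*n) div ?W) ` {j\<in>S. k*n \<le> j}"
  have "card TB \<le> card S" unfolding TB_def using fS by (metis (no_types, lifting) card_image_le card_mono finite_subset le_trans mem_Collect_eq subsetI)
  then have "card TB < n" using cS small(1) mn by linarith
  then obtain b where b: "b < n" "b \<notin> TB"
  proof -
    assume h: "\<And>b. b < n \<Longrightarrow> b \<notin> TB \<Longrightarrow> thesis"
    show thesis
    proof (rule ccontr)
      assume "\<not> thesis"
      then have "{..<n} \<subseteq> TB" using h by auto
      moreover have "finite TB" unfolding TB_def using fS by simp
      ultimately have "n \<le> card TB" by (metis card_lessThan card_mono)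
      then show False using \<open>card TB < n\<close> by simp
    qed
  qed
  have "\<forall>i. \<exists>y. i < k \<longrightarrow> length y = n \<and> consistent (\<rho>i i) y \<and> f y = Some (bit b i)"
  proof
    fix i
    show "\<exists>y. i < k \<longrightarrow> length y = n \<and> consistent (\<rho>i i) y \<and> f y = Some (bit b i)"
    proof (cases "i < k")
      case True
      have s0: "psize (\<rho>i i) < C_at n f Sigbar0 x" using pi[OF True] small(1) by linarith
      have s1: "psize (\<rho>i i) < C_at n f Sigbar1 x" using pi[OF True] small(2) by linarith
      from exists_input[OF lx ci[OF True] fx s0 s1, of "bit b i"] show ?thesis by blast
    qed simp
  qed
  then obtain Y where Y: "\<And>i. i < k \<Longrightarrow> length (Y i) = n \<and> consistent (\<rho>i i) (Y i) \<and> f (Y i) = Some (bit b i)"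
    by metis
  have "\<forall>i. \<exists>Q. i < k \<longrightarrow> (\<forall>e<c. Q e < n) \<and>
     (\<forall>x'. length x' = n \<longrightarrow> (\<forall>e<c. x' ! Q e = Y i ! Q e) \<longrightarrow> f x' = Some (bit b i))"
  proof
    fix i
    show "\<exists>Q. i < k \<longrightarrow> (\<forall>e<c. Q e < n) \<and>
     (\<forall>x'. length x' = n \<longrightarrow> (\<forall>e<c. x' ! Q e = Y i ! Q e) \<longrightarrow> f x' = Some (bit b i))"
    proof (cases "i < k")
      case True
      obtain SS where SS: "SS \<subseteq> {..<n}" "card SS \<le> c"
        "\<forall>x'. length x' = n \<longrightarrow> (\<forall>p\<in>SS. x' ! p = Y i ! p) \<longrightarrow> f x' = Some (bit b i)"
        using small_cert[of "Y i" n f "bit b i"] Y[OF True] c by auto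
      obtain Q where Q: "\<forall>e<c. Q e < n" "SS \<subseteq> Q ` {..<c}" using cover_list[OF SS(1,2) npos] by blast
      have "\<forall>x'. length x' = n \<longrightarrow> (\<forall>e<c. x' ! Q e = Y i ! Q e) \<longrightarrow> f x' = Some (bit b i)"
      proof (intro allI impI)
        fix x' assume a: "length x' = n" "\<forall>e<c. x' ! Q e = Y i ! Q e"
        have "\<forall>p\<in>SS. x' ! p = Y i ! p" using a(2) Q(2) by auto
        then show "f x' = Some (bit b i)" using SS(3) a(1) by blast
      qed
      then show ?thesis using Q by blast
    qed simp
  qed
  then obtain P where P: "\<And>i. i < k \<Longrightarrow> (\<forall>e<c. P i e < n) \<and>
     (\<forall>x'. length x' = n \<longrightarrow> (\<forall>e<c. x' ! P i e = Y i ! P i e) \<longrightarrow> f x' = Some (bit b i))"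
    by metis
  have good: "goodt n k c f b P Y" unfolding goodt_def certok_def using b(1) P by blast
  define t where "t = mkterm n k c b P Y"
  define z where "z = map (\<lambda>j. case \<rho> ! j of Some v \<Rightarrow> v | None \<Rightarrow> (case t ! j of Some v \<Rightarrow> v | None \<Rightarrow> False)) [0..<NN n k c]"
  have lz: "length z = NN n k c" unfolding z_def by simp
  have crz: "consistent \<rho> z" unfolding consistent_def using lr lz by (auto simp: z_def)
  have ctz: "consistent t z" unfolding consistent_def
  proof (intro conjI allI impI)
    show "length t = length z" using lz unfolding t_def by simp
    fix j assume j: "j < length z" "t ! j \<noteq> None"
    then have jN: "j < NN n k c" using lz by simp
    have "\<rho> ! j = None \<or> \<rho> ! j = t ! j"
    proof (cases "j < k*n")
      case True
      define i where "i = j div n"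
      define p where "p = j mod n"
      have i: "i < k" unfolding i_def using True by (simp add: less_mult_imp_div_less)
      have p: "p < n" unfolding p_def using npos by simp
      have jj: "j = i*n+p" unfolding i_def p_def by simp
      have tj: "t ! j = Some (Y i ! p)" using j(2) jN True unfolding t_def i_def p_def
        by (auto simp: mkterm_nth mkf_def split: if_splits)
      have "\<rho>i i ! p = \<rho> ! j" unfolding \<rho>i_def using p jj by simp
      moreover have "\<rho>i i ! p \<noteq> None \<Longrightarrow> \<rho>i i ! p = Some (Y i ! p)"
        using Y[OF i] p consistentD by blast
      ultimately show ?thesis using tj by (cases "\<rho> ! j") auto
    next
      case False
      then have "(j - k*n) div ?W = b" using j(2) jN unfolding t_def
        by (auto simp: mkterm_nth mkf_def split: if_splits)
      then have "\<rho> ! j = None" using b(2) False jN lr unfolding TB_def S_def by force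
      then show ?thesis by simp
    qed
    then show "t ! j = Some (z ! j)" using j jN unfolding z_def by (auto split: option.splits)
  qed
  have "gfun n k c f z" unfolding gfun_def Terms_def using good ctz t_def by blast
  moreover have "Some (gfun n k c f z) \<in> Sig0" using cert crz lz unfolding is_cert_def by blast
  ultimately show False by simp
qed


lemma arith1:
  fixes n k c :: nat assumes "c \<le> n" "1 \<le> k" "1 \<le> n"
  shows "NN n k c \<le> 3 * n^2 * k^2"
proof -
  have a: "k*c*k \<le> k*n*k" using assms by simp
  have "n*(k*c*k) \<le> n*(k*n*k)" using a by (rule mult_le_mono2)
  moreover have "k*n \<le> n*(k*n*k)" using assms by simp
  ultimately have "NN n k c \<le> 2*(n*(k*n*k))" unfolding NN_def by linarith
  also have "\<dots> \<le> 3 * n^2 * k^2" by (simp add: power2_eq_square algebra_simps)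
  finally show ?thesis .
qed

lemma arith2:
  fixes k c :: nat assumes "1 \<le> k"
  shows "k*c + k*c*k \<le> 3 * c * k^2"
proof -
  have "k*c \<le> k*c*k" using assms by simp
  then have "k*c + k*c*k \<le> 2*(k*c*k)" by linarith
  also have "\<dots> \<le> 3 * c * k^2" by (simp add: power2_eq_square algebra_simps)
  finally show ?thesis .
qed

theorem theorem2p2:
  fixes n :: nat and f :: "bool list \<Rightarrow> bool option" and x :: "bool list"
  assumes "n \<ge> 2" and "\<exists>m::nat. n = 2 ^ m"
    and "length x = n" and "f x = None"
  shows "\<exists>(N::nat) (g :: bool list \<Rightarrow> bool).
           real N \<le> 3 * (real n)^2 * (log 2 (real n))^2 \<and>
           C0_total N g \<ge> min (C_at n f Sigbar0 x) (C_at n f Sigbar1 x) \<and>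
           real (UC1 N g) \<le> 3 * real (C_total n f) * (log 2 (real n))^2"
proof -
  obtain k where n: "n = 2^k" using assms(2) by blast
  have k: "1 \<le> k"
  proof (rule ccontr)
    assume "\<not> 1 \<le> k" then have "k = 0" by simp
    then show False using n assms(1) by simp
  qed
  have lg: "log 2 (real n) = real k" using n by (simp add: log_nat_power)
  define c where "c = C_total n f"
  have cn: "c \<le> n" unfolding c_def C_total_def using C_fun_le[of n f] by simp
  define N where "N = NN n k c"
  define g where "g = gfun n k c f"
  have n1: "1 \<le> n" using assms(1) by simp
  have "N \<le> 3 * n^2 * k^2" unfolding N_def using arith1[OF cn k n1] .
  then have r1: "real N \<le> 3 * (real n)^2 * (log 2 (real n))^2" unfolding lg
    by (metis (mono_tags, lifting) of_nat_le_iff of_nat_mult of_nat_numeral of_nat_power)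
  have "UC1 N g \<le> 3 * c * k^2" unfolding N_def g_def using UC1_bound[OF n, of c f] arith2[OF k, of c] by linarith
  then have r3: "real (UC1 N g) \<le> 3 * real (C_total n f) * (log 2 (real n))^2" unfolding lg c_def
    by (metis (mono_tags, lifting) of_nat_le_iff of_nat_mult of_nat_numeral of_nat_power)
  have k0: "0 < k" using k by simp
  have lz0: "length (z0 n k c x) = N" unfolding z0_def N_def by simp
  have g0: "(\<lambda>z. Some (g z)) (z0 n k c x) \<in> Sig0" using g_z0[of k x n f c, OF k0 assms(3,4)] unfolding g_def by simp
  obtain \<rho> where r: "is_cert N (\<lambda>z. Some (g z)) Sig0 \<rho> (z0 n k c x)"
      "psize \<rho> = C_at N (\<lambda>z. Some (g z)) Sig0 (z0 n k c x)"
    using C_at_witness[of "z0 n k c x" N "\<lambda>z. Some (g z)" Sig0, OF lz0 g0] by blast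
  have "min (C_at n f Sigbar0 x) (C_at n f Sigbar1 x) \<le> psize \<rho>"
    using adversary[OF n k0 assms(3,4) c_def] r(1) unfolding N_def g_def by blast
  also have "\<dots> \<le> C0_total N g" unfolding C0_total_def r(2) by (rule C_fun_ge[of "z0 n k c x" N "\<lambda>z. Some (g z)" Sig0, OF lz0 g0])
  finally have r2: "C0_total N g \<ge> min (C_at n f Sigbar0 x) (C_at n f Sigbar1 x)" .
  show ?thesis using r1 r2 r3 by blast
qed

end
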